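(* Let $(R,\mathfrak{m})$ be a finite commutative local ring with identity and let $I$ be an ideal of $R$ with $I\subseteq\mathfrak m$ such that $\mathfrak{m}/I$ is not a principal ideal of $R/I$. If some minimal generating set of $\mathfrak{m}/I$ contains distinct elements $x+I$ and $y+I$ with $|U(R)x|\geq 3$ and $|U(R)y|\geq 3$, then $\Gamma''_I(R)$ is not planar.
   Context: $U(R)$ is the group of units of $R$ and $U(R)x=\{ux: u\in U(R)\}$. For an ideal $I$ of $R$, $\Gamma''_I(R)$ is the simple undirected graph whose vertex set is $\{x\in R\setminus I : xR+I\neq R\}$, with distinct vertices $x,y$ adjacent if and only if $x\notin yR+I$ and $y\notin xR+I$. A graph is planar if it can be drawn in the plane with edges meeting only at their endpoints. *)

theory Defs
  imports "HOL-Analysis.Analysis"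
begin

definition is_ideal :: "'a::comm_ring_1 set \<Rightarrow> bool" where
  "is_ideal I \<longleftrightarrow> 0 \<in> I \<and> (\<forall>x\<in>I. \<forall>y\<in>I. x + y \<in> I) \<and> (\<forall>r. \<forall>x\<in>I. r * x \<in> I)"

definition is_maximal_ideal :: "'a::comm_ring_1 set \<Rightarrow> bool" where
  "is_maximal_ideal M \<longleftrightarrow> is_ideal M \<and> M \<noteq> UNIV \<and>
     (\<forall>J. is_ideal J \<and> M \<subseteq> J \<longrightarrow> J = M \<or> J = UNIV)"

definition local_ring_with :: "'a::comm_ring_1 set \<Rightarrow> bool" where
  "local_ring_with M \<longleftrightarrow> is_maximal_ideal M \<and> (\<forall>J. is_maximal_ideal J \<longrightarrow> J = M)"

definition units :: "'a::comm_ring_1 set" where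
  "units = {u. u dvd 1}"

definition unit_orbit :: "'a::comm_ring_1 \<Rightarrow> 'a set" where
  "unit_orbit x = {u * x | u. u \<in> units}"

definition coset :: "'a::comm_ring_1 set \<Rightarrow> 'a \<Rightarrow> 'a set" where
  "coset I x = {x + i | i. i \<in> I}"

definition principal_plus :: "'a::comm_ring_1 set \<Rightarrow> 'a \<Rightarrow> 'a set" where
  "principal_plus I x = {x * r + i | r i. i \<in> I}"

text \<open>Preimage in R of the ideal of R/I generated by a (finite) set S of cosets of I.\<close>
definition quot_gen :: "'a::comm_ring_1 set \<Rightarrow> 'a set set \<Rightarrow> 'a set" where
  "quot_gen I S = {z. \<exists>r rep. (\<forall>C\<in>S. rep C \<in> C) \<and> z - (\<Sum>C\<in>S. r C * rep C) \<in> I}"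

text \<open>M/I is a principal ideal of R/I (M an ideal containing I).\<close>
definition quot_principal :: "'a::comm_ring_1 set \<Rightarrow> 'a set \<Rightarrow> bool" where
  "quot_principal I M \<longleftrightarrow> (\<exists>a. M = principal_plus I a)"

text \<open>S is a minimal generating set of M/I (a set of cosets of I, minimal w.r.t. inclusion).\<close>
definition min_gen_set :: "'a::comm_ring_1 set \<Rightarrow> 'a set \<Rightarrow> 'a set set \<Rightarrow> bool" where
  "min_gen_set I M S \<longleftrightarrow> S \<subseteq> range (coset I) \<and> quot_gen I S = M \<and>
     (\<forall>T. T \<subset> S \<longrightarrow> quot_gen I T \<noteq> M)"

definition gamma_vertices :: "'a::comm_ring_1 set \<Rightarrow> 'a set" where
  "gamma_vertices I = {x. x \<notin> I \<and> principal_plus I x \<noteq> UNIV}"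

definition gamma_adj :: "'a::comm_ring_1 set \<Rightarrow> 'a \<Rightarrow> 'a \<Rightarrow> bool" where
  "gamma_adj I x y \<longleftrightarrow> x \<in> gamma_vertices I \<and> y \<in> gamma_vertices I \<and> x \<noteq> y \<and>
     x \<notin> principal_plus I y \<and> y \<notin> principal_plus I x"

definition planar :: "'v set \<Rightarrow> ('v \<Rightarrow> 'v \<Rightarrow> bool) \<Rightarrow> bool" where
  "planar V E \<longleftrightarrow> (\<exists>(p :: 'v \<Rightarrow> complex) (\<gamma> :: 'v \<Rightarrow> 'v \<Rightarrow> real \<Rightarrow> complex).
     inj_on p V \<and>
     (\<forall>u\<in>V. \<forall>v\<in>V. E u v \<longrightarrow>
        arc (\<gamma> u v) \<and> pathstart (\<gamma> u v) = p u \<and> pathfinish (\<gamma> u v) = p v \<and>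
        path_image (\<gamma> u v) \<inter> p ` V \<subseteq> {p u, p v}) \<and>
     (\<forall>u\<in>V. \<forall>v\<in>V. \<forall>w\<in>V. \<forall>z\<in>V. E u v \<and> E w z \<and> {u, v} \<noteq> {w, z} \<longrightarrow>
        path_image (\<gamma> u v) \<inter> path_image (\<gamma> w z) \<subseteq> p ` ({u, v} \<inter> {w, z})))"

end

theory Submission
  imports Defs
begin

lemma jordan2:
  fixes c1 c2 :: "real \<Rightarrow> complex"
  assumes "arc c1" "arc c2" "pathstart c1 = a" "pathfinish c1 = b" "pathstart c2 = a"
    "pathfinish c2 = b" "a \<noteq> b" "path_image c1 \<inter> path_image c2 = {a,b}"
  shows "inside (path_image c1 \<union> path_image c2) \<noteq> {} \<and>
    open (inside (path_image c1 \<union> path_image c2)) \<and>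
    connected (inside (path_image c1 \<union> path_image c2)) \<and>
    open (outside (path_image c1 \<union> path_image c2)) \<and>
    connected (outside (path_image c1 \<union> path_image c2)) \<and>
    bounded (inside (path_image c1 \<union> path_image c2)) \<and>
    frontier (inside (path_image c1 \<union> path_image c2)) = path_image c1 \<union> path_image c2 \<and>
    closed (path_image c1 \<union> path_image c2) \<and> bounded (path_image c1 \<union> path_image c2)"
proof -
  have sp: "simple_path (c1 +++ reversepath c2)"
    using assms by (auto simp: simple_path_join_loop_eq arc_reversepath)
  have im: "path_image (c1 +++ reversepath c2) = path_image c1 \<union> path_image c2"
    using assms by (simp add: path_image_join)
  have "pathfinish (c1 +++ reversepath c2) = pathstart (c1 +++ reversepath c2)"
    using assms by simp
  from Jordan_inside_outside[OF sp this] im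
  show ?thesis using assms
    by (simp add: closed_Un closed_path_image arc_imp_path bounded_Un bounded_path_image)
qed

lemma path_side_in:
  fixes K :: "complex set"
  assumes "closed K" "path g" "path_image g \<inter> K \<subseteq> {pathfinish g}" "pathstart g \<in> inside K"
  shows "pathfinish g \<in> K \<union> inside K"
proof (rule ccontr)
  assume nb: "pathfinish g \<notin> K \<union> inside K"
  then have "pathfinish g \<in> outside K" using inside_Un_outside by blast
  moreover have "path_image g \<subseteq> inside K \<union> outside K"
    using assms(3) nb by (auto simp: inside_outside)
  moreover have "connected (path_image g)" using assms(2) by (simp add: connected_path_image)
  ultimately show False
    using connectedD[of "path_image g" "inside K" "outside K"] assms
    by (auto simp: open_inside open_outside)
qed

lemma path_side_out:
  fixes K :: "complex set"
  assumes "closed K" "path g" "path_image g \<inter> K \<subseteq> {pathfinish g}" "pathstart g \<in> outside K"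
  shows "pathfinish g \<in> K \<union> outside K"
proof (rule ccontr)
  assume nb: "pathfinish g \<notin> K \<union> outside K"
  then have "pathfinish g \<in> inside K" using inside_Un_outside by blast
  moreover have "path_image g \<subseteq> inside K \<union> outside K"
    using assms(3) nb by (auto simp: inside_outside)
  moreover have "connected (path_image g)" using assms(2) by (simp add: connected_path_image)
  ultimately show False
    using connectedD[of "path_image g" "inside K" "outside K"] assms
    by (auto simp: open_inside open_outside)
qed

lemma theta_contra:
  fixes c1 c2 c g1 g2 g3 :: "real \<Rightarrow> complex"
  assumes "arc c1" "arc c2" "arc c"
    and c1: "pathstart c1 = a" "pathfinish c1 = b"
    and c2: "pathstart c2 = a" "pathfinish c2 = b"
    and c: "pathstart c = a" "pathfinish c = b"
    and "a \<noteq> b"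
    and c1c2: "path_image c1 \<inter> path_image c2 = {a,b}"
    and c1c: "path_image c1 \<inter> path_image c = {a,b}"
    and c2c: "path_image c2 \<inter> path_image c = {a,b}"
    and ne: "path_image c \<inter> inside(path_image c1 \<union> path_image c2) \<noteq> {}"
    and b1: "b1 \<in> path_image c1" "b1 \<notin> path_image c2" "b1 \<notin> path_image c"
    and b2: "b2 \<in> path_image c2" "b2 \<notin> path_image c1" "b2 \<notin> path_image c"
    and b3: "b3 \<in> path_image c" "b3 \<notin> path_image c1" "b3 \<notin> path_image c2"
    and q: "q \<notin> path_image c1 \<union> path_image c2 \<union> path_image c"
    and g1: "path g1" "pathstart g1 = q" "pathfinish g1 = b1"
       "path_image g1 \<inter> (path_image c1 \<union> path_image c2 \<union> path_image c) \<subseteq> {b1}"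
    and g2: "path g2" "pathstart g2 = q" "pathfinish g2 = b2"
       "path_image g2 \<inter> (path_image c1 \<union> path_image c2 \<union> path_image c) \<subseteq> {b2}"
    and g3: "path g3" "pathstart g3 = q" "pathfinish g3 = b3"
       "path_image g3 \<inter> (path_image c1 \<union> path_image c2 \<union> path_image c) \<subseteq> {b3}"
  shows False
proof -
  let ?T = "path_image c"  let ?T1 = "path_image c1"  let ?T2 = "path_image c2"
  obtain H2: "inside(?T1 \<union> ?T) \<union> inside(?T2 \<union> ?T) \<union> (?T - {a,b}) = inside(?T1 \<union> ?T2)"
    using split_inside_simple_closed_curve[OF arc_imp_simple_path[OF \<open>arc c1\<close>] c1
      arc_imp_simple_path[OF \<open>arc c2\<close>] c2 arc_imp_simple_path[OF \<open>arc c\<close>] c \<open>a\<noteq>b\<close> c1c2 c1c c2c ne]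
    by blast
  have cl12: "closed (?T1 \<union> ?T2)" "closed (?T1 \<union> ?T)" "closed (?T2 \<union> ?T)"
    using assms by (auto simp: closed_Un closed_path_image arc_imp_path)
  have "b3 \<noteq> a" "b3 \<noteq> b" using b3 c1 pathstart_in_path_image pathfinish_in_path_image by metis+
  then have b3in: "b3 \<in> inside (?T1 \<union> ?T2)" using H2 b3 by blast
  show False
  proof (cases "q \<in> outside (?T1 \<union> ?T2)")
    case True
    have "b3 \<in> (?T1 \<union> ?T2) \<union> outside (?T1 \<union> ?T2)"
      using path_side_out[OF cl12(1) g3(1) _ ] g3 True by blast
    then show False using b3in b3 inside_Int_outside by blast
  next
    case False
    then have "q \<in> inside (?T1 \<union> ?T2)" using q inside_Un_outside by blast
    then have "q \<in> inside(?T1 \<union> ?T) \<or> q \<in> inside(?T2 \<union> ?T)" using H2 q by blast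
    then show False
    proof
      assume qi: "q \<in> inside(?T1 \<union> ?T)"
      have "b2 \<in> (?T1 \<union> ?T) \<union> inside (?T1 \<union> ?T)"
        using path_side_in[OF cl12(2) g2(1) _ ] g2 qi by blast
      then have "b2 \<in> inside (?T1 \<union> ?T2)" using b2 H2 by blast
      then show False using b2 inside_no_overlap by blast
    next
      assume qi: "q \<in> inside(?T2 \<union> ?T)"
      have "b1 \<in> (?T2 \<union> ?T) \<union> inside (?T2 \<union> ?T)"
        using path_side_in[OF cl12(3) g1(1) _ ] g1 qi by blast
      then have "b1 \<in> inside (?T1 \<union> ?T2)" using b1 H2 by blast
      then show False using b1 inside_no_overlap by blast
    qed
  qed
qed

lemma insides_disjoint:
  fixes c1 c2 c3 :: "real \<Rightarrow> complex"
  assumes "arc c1" "arc c2" "arc c3"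
    and c1: "pathstart c1 = a" "pathfinish c1 = b"
    and c2: "pathstart c2 = a" "pathfinish c2 = b"
    and c3: "pathstart c3 = a" "pathfinish c3 = b"
    and "a \<noteq> b"
    and c1c2: "path_image c1 \<inter> path_image c2 = {a,b}"
    and c1c3: "path_image c1 \<inter> path_image c3 = {a,b}"
    and c2c3: "path_image c2 \<inter> path_image c3 = {a,b}"
    and h2: "path_image c2 \<inter> inside(path_image c1 \<union> path_image c3) = {}"
    and h3: "path_image c3 \<inter> inside(path_image c1 \<union> path_image c2) = {}"
  shows "inside(path_image c1 \<union> path_image c2) \<inter> inside(path_image c1 \<union> path_image c3) = {}"
proof (rule ccontr)
  let ?T1 = "path_image c1"  let ?T2 = "path_image c2"  let ?T3 = "path_image c3"
  assume ne: "inside(?T1 \<union> ?T2) \<inter> inside(?T1 \<union> ?T3) \<noteq> {}"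
  have J12: "connected (inside (?T1 \<union> ?T2))" "frontier (inside (?T1 \<union> ?T2)) = ?T1 \<union> ?T2"
    using jordan2[OF \<open>arc c1\<close> \<open>arc c2\<close> c1 c2 \<open>a\<noteq>b\<close> c1c2] by auto
  have J13: "open (inside (?T1 \<union> ?T3))" "open (outside (?T1 \<union> ?T3))"
     "frontier (inside (?T1 \<union> ?T3)) = ?T1 \<union> ?T3"
    using jordan2[OF \<open>arc c1\<close> \<open>arc c3\<close> c1 c3 \<open>a\<noteq>b\<close> c1c3] by auto
  have sub: "inside(?T1 \<union> ?T2) \<subseteq> inside(?T1 \<union> ?T3) \<union> outside(?T1 \<union> ?T3)"
  proof
    fix x assume x: "x \<in> inside(?T1 \<union> ?T2)"
    then have "x \<notin> ?T1" "x \<notin> ?T3" using h3 inside_no_overlap by blast+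
    then show "x \<in> inside(?T1 \<union> ?T3) \<union> outside(?T1 \<union> ?T3)" by (simp add: inside_Un_outside)
  qed
  have "inside(?T1 \<union> ?T3) \<inter> outside(?T1 \<union> ?T3) \<inter> inside(?T1 \<union> ?T2) = {}" by auto
  then have "inside(?T1 \<union> ?T3) \<inter> inside(?T1 \<union> ?T2) = {} \<or> outside(?T1 \<union> ?T3) \<inter> inside(?T1 \<union> ?T2) = {}"
    using connectedD[OF J12(1) J13(1) J13(2) _ sub] by blast
  then have "inside(?T1 \<union> ?T2) \<subseteq> inside(?T1 \<union> ?T3)" using ne sub by blast
  then have "closure (inside(?T1 \<union> ?T2)) \<subseteq> closure (inside(?T1 \<union> ?T3))" by (rule closure_mono)
  then have T2sub: "?T2 \<subseteq> inside(?T1 \<union> ?T3) \<union> ?T1 \<union> ?T3"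
    using J12(2) J13(3) closure_Un_frontier by (metis Un_subset_iff sup_assoc)
  obtain z where z: "z \<in> ?T2 - {a,b}"
    using nonempty_simple_path_endless[OF arc_imp_simple_path[OF \<open>arc c2\<close>]] c2 by blast
  then have "z \<notin> ?T1" "z \<notin> ?T3" using c1c2 c2c3 by blast+
  then have "z \<in> inside(?T1 \<union> ?T3)" using T2sub z by blast
  then show False using h2 z by blast
qed

lemma theta_middle:
  fixes c1 c2 c3 :: "real \<Rightarrow> complex"
  assumes "arc c1" "arc c2" "arc c3"
    and c1: "pathstart c1 = a" "pathfinish c1 = b"
    and c2: "pathstart c2 = a" "pathfinish c2 = b"
    and c3: "pathstart c3 = a" "pathfinish c3 = b"
    and "a \<noteq> b"
    and c1c2: "path_image c1 \<inter> path_image c2 = {a,b}"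
    and c1c3: "path_image c1 \<inter> path_image c3 = {a,b}"
    and c2c3: "path_image c2 \<inter> path_image c3 = {a,b}"
  shows "path_image c3 \<inter> inside(path_image c1 \<union> path_image c2) \<noteq> {} \<or>
         path_image c1 \<inter> inside(path_image c2 \<union> path_image c3) \<noteq> {} \<or>
         path_image c2 \<inter> inside(path_image c1 \<union> path_image c3) \<noteq> {}"
proof (rule ccontr)
  let ?T1 = "path_image c1"  let ?T2 = "path_image c2"  let ?T3 = "path_image c3"
  assume "\<not> ?thesis"
  then have h3: "?T3 \<inter> inside(?T1 \<union> ?T2) = {}" and h1: "?T1 \<inter> inside(?T2 \<union> ?T3) = {}"
    and h2: "?T2 \<inter> inside(?T1 \<union> ?T3) = {}" by auto
  have c2c1: "?T2 \<inter> ?T1 = {a,b}" and c3c1: "?T3 \<inter> ?T1 = {a,b}" and c3c2: "?T3 \<inter> ?T2 = {a,b}"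
    using c1c2 c1c3 c2c3 by blast+
  have D1: "inside(?T1 \<union> ?T2) \<inter> inside(?T1 \<union> ?T3) = {}"
    by (rule insides_disjoint[OF \<open>arc c1\<close> \<open>arc c2\<close> \<open>arc c3\<close> c1 c2 c3 \<open>a\<noteq>b\<close> c1c2 c1c3 c2c3 h2 h3])
  have D2: "inside(?T2 \<union> ?T1) \<inter> inside(?T2 \<union> ?T3) = {}"
    by (rule insides_disjoint[OF \<open>arc c2\<close> \<open>arc c1\<close> \<open>arc c3\<close> c2 c1 c3 \<open>a\<noteq>b\<close> c2c1 c2c3 c1c3 h1])
       (use h3 in \<open>simp add: Un_commute\<close>)
  have D3: "inside(?T3 \<union> ?T1) \<inter> inside(?T3 \<union> ?T2) = {}"
    by (rule insides_disjoint[OF \<open>arc c3\<close> \<open>arc c1\<close> \<open>arc c2\<close> c3 c1 c2 \<open>a\<noteq>b\<close> c3c1 c3c2 c1c2])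
       (use h1 h2 in \<open>simp_all add: Un_commute\<close>)
  have J12: "connected (outside (?T1 \<union> ?T2))" "frontier (inside (?T1 \<union> ?T2)) = ?T1 \<union> ?T2"
     "bounded (inside (?T1 \<union> ?T2))"
    using jordan2[OF \<open>arc c1\<close> \<open>arc c2\<close> c1 c2 \<open>a\<noteq>b\<close> c1c2] by auto
  have J13: "connected (outside (?T1 \<union> ?T3))" "frontier (inside (?T1 \<union> ?T3)) = ?T1 \<union> ?T3"
     "bounded (inside (?T1 \<union> ?T3))"
    using jordan2[OF \<open>arc c1\<close> \<open>arc c3\<close> c1 c3 \<open>a\<noteq>b\<close> c1c3] by auto
  have J23: "inside (?T2 \<union> ?T3) \<noteq> {}" "open (inside (?T2 \<union> ?T3))" "open (outside (?T2 \<union> ?T3))"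
     "bounded (inside (?T2 \<union> ?T3))" "bounded (?T2 \<union> ?T3)"
    using jordan2[OF \<open>arc c2\<close> \<open>arc c3\<close> c2 c3 \<open>a\<noteq>b\<close> c2c3] by auto
  define S where "S = closure (inside (?T1 \<union> ?T2))"
  define T where "T = closure (inside (?T1 \<union> ?T3))"
  have S: "S = inside (?T1 \<union> ?T2) \<union> (?T1 \<union> ?T2)" using S_def J12 closure_Un_frontier by metis
  have T: "T = inside (?T1 \<union> ?T3) \<union> (?T1 \<union> ?T3)" using T_def J13 closure_Un_frontier by metis
  have ab: "a \<in> ?T1" "b \<in> ?T1" using c1 pathstart_in_path_image pathfinish_in_path_image by metis+
  have ST: "S \<inter> T = ?T1"
    using D1 h2 h3 c2c3 ab unfolding S T by auto
  have cS: "compact S" unfolding S_def using J12(3) by (simp add: compact_closure)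
  have clT: "closed T" unfolding T_def by simp
  have "connected (S \<inter> T)" unfolding ST using \<open>arc c1\<close> by (simp add: arc_imp_path connected_path_image)
  moreover have "connected (- S)" unfolding S using J12(1) by (simp add: outside_inside Un_commute)
  moreover have "connected (- T)" unfolding T using J13(1) by (simp add: outside_inside Un_commute)
  ultimately have conn: "connected (- (S \<union> T))" using Janiszewski_connected cS clT by blast
  have in23: "inside (?T2 \<union> ?T3) \<subseteq> - (S \<union> T)"
    proof
    fix x assume x: "x \<in> inside (?T2 \<union> ?T3)"
    then have "x \<notin> ?T2" "x \<notin> ?T3" using inside_no_overlap[of "?T2 \<union> ?T3"] by blast+
    then show "x \<in> - (S \<union> T)" using x D2 D3 h1 unfolding S T by (auto simp: Un_commute)
  qed
  have "bounded (S \<union> T \<union> (?T2 \<union> ?T3) \<union> inside (?T2 \<union> ?T3))"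
    using cS J13(3) J23 unfolding T_def by (simp add: compact_imp_bounded bounded_Un)
  then obtain z where z: "z \<notin> S \<union> T \<union> (?T2 \<union> ?T3) \<union> inside (?T2 \<union> ?T3)"
    using not_bounded_UNIV[where 'a=complex] by (metis UNIV_I bounded_subset subsetI)
  then have zo: "z \<in> outside (?T2 \<union> ?T3)" by (simp add: outside_inside)
  have cov: "- (S \<union> T) \<subseteq> inside (?T2 \<union> ?T3) \<union> outside (?T2 \<union> ?T3)"
    unfolding S T by (auto simp: inside_Un_outside)
  have "inside (?T2 \<union> ?T3) \<inter> outside (?T2 \<union> ?T3) \<inter> - (S \<union> T) = {}" by auto
  then have "inside (?T2 \<union> ?T3) \<inter> - (S \<union> T) = {} \<or> outside (?T2 \<union> ?T3) \<inter> - (S \<union> T) = {}"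
    using connectedD[OF conn J23(2) J23(3) _ cov] by blast
  then show False using in23 J23(1) zo z by blast
qed

lemma K33_not_planar:
  fixes V :: "'v set" and E :: "'v \<Rightarrow> 'v \<Rightarrow> bool"
  assumes V: "a1 \<in> V" "a2 \<in> V" "a3 \<in> V" "b1 \<in> V" "b2 \<in> V" "b3 \<in> V"
    and dist: "distinct [a1,a2,a3,b1,b2,b3]"
    and Eall: "\<And>a b. a \<in> {a1,a2,a3} \<Longrightarrow> b \<in> {b1,b2,b3} \<Longrightarrow> E a b"
  shows "\<not> planar V E"
proof
  assume "planar V E"
  obtain p :: "'v \<Rightarrow> complex" and \<gamma> where inj: "inj_on p V"
    and ed: "\<forall>u\<in>V. \<forall>v\<in>V. E u v \<longrightarrow>
        arc (\<gamma> u v) \<and> pathstart (\<gamma> u v) = p u \<and> pathfinish (\<gamma> u v) = p v \<and>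
        path_image (\<gamma> u v) \<inter> p ` V \<subseteq> {p u, p v}"
    and cr: "\<forall>u\<in>V. \<forall>v\<in>V. \<forall>w\<in>V. \<forall>z\<in>V. E u v \<and> E w z \<and> {u, v} \<noteq> {w, z} \<longrightarrow>
        path_image (\<gamma> u v) \<inter> path_image (\<gamma> w z) \<subseteq> p ` ({u, v} \<inter> {w, z})"
    using \<open>planar V E\<close> unfolding planar_def by (elim exE conjE) (rule that)
  let ?A = "{a1,a2,a3}" let ?B = "{b1,b2,b3}"
  have AV: "a \<in> V" if "a \<in> ?A" for a using that V by auto
  have BV: "b \<in> V" if "b \<in> ?B" for b using that V by auto
  have AB: "a \<noteq> b" if "a \<in> ?A" "b \<in> ?B" for a b using that dist by auto
  have pinj: "p x = p y \<longleftrightarrow> x = y" if "x \<in> V" "y \<in> V" for x y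
    using inj that by (meson inj_on_eq_iff)
  have E1: "arc (\<gamma> a b)" "pathstart (\<gamma> a b) = p a" "pathfinish (\<gamma> a b) = p b"
    "path_image (\<gamma> a b) \<inter> p ` V \<subseteq> {p a, p b}" if "a \<in> ?A" "b \<in> ?B" for a b
    using ed[rule_format, OF AV[OF that(1)] BV[OF that(2)] Eall[OF that]] by blast+
  have X: "x \<in> p ` ({a,b} \<inter> {a',b'})" if "a \<in> ?A" "b \<in> ?B" "a' \<in> ?A" "b' \<in> ?B"
    "a \<noteq> a' \<or> b \<noteq> b'" "x \<in> path_image (\<gamma> a b)" "x \<in> path_image (\<gamma> a' b')" for a b a' b' x
  proof -
    have "a \<noteq> b'" "a' \<noteq> b" using AB that(1-4) by blast+
    then have "{a,b} \<noteq> {a',b'}" using that(5) by (auto simp: doubleton_eq_iff)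
    then show ?thesis
      using cr[rule_format, of a b a' b', OF AV[OF that(1)] BV[OF that(2)] AV[OF that(3)] BV[OF that(4)]]
        Eall[OF that(1,2)] Eall[OF that(3,4)] that(6,7) by blast
  qed
  have Y: "p v \<in> {p a, p b}" if "a \<in> ?A" "b \<in> ?B" "v \<in> V" "p v \<in> path_image (\<gamma> a b)" for a b v
    using E1(4)[OF that(1,2)] that by blast
  define P where "P b = \<gamma> a1 b +++ reversepath (\<gamma> a2 b)" for b
  have P: "arc (P b)" "pathstart (P b) = p a1" "pathfinish (P b) = p a2"
     "path_image (P b) = path_image (\<gamma> a1 b) \<union> path_image (\<gamma> a2 b)" if b: "b \<in> ?B" for b
  proof -
    have i: "path_image (\<gamma> a1 b) \<inter> path_image (\<gamma> a2 b) \<subseteq> {p b}"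
      using X[of a1 b a2 b] b dist by auto
    show "arc (P b)" unfolding P_def using E1[of a1 b] E1[of a2 b] b i
      by (subst arc_join_eq) (auto simp: arc_reversepath)
    show "pathstart (P b) = p a1" "pathfinish (P b) = p a2"
      unfolding P_def using E1[of a1 b] E1[of a2 b] b by auto
    show "path_image (P b) = path_image (\<gamma> a1 b) \<union> path_image (\<gamma> a2 b)"
      unfolding P_def using E1[of a1 b] E1[of a2 b] b by (simp add: path_image_join)
  qed
  have PP: "path_image (P b) \<inter> path_image (P b') = {p a1, p a2}" if "b \<in> ?B" "b' \<in> ?B" "b \<noteq> b'" for b b'
  proof
    show "{p a1, p a2} \<subseteq> path_image (P b) \<inter> path_image (P b')"
      using P[OF that(1)] P[OF that(2)] by (metis Int_iff empty_subsetI insert_subset pathfinish_in_path_image pathstart_in_path_image)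
    show "path_image (P b) \<inter> path_image (P b') \<subseteq> {p a1, p a2}"
      unfolding P(4)[OF that(1)] P(4)[OF that(2)]
      using X[of a1 b a1 b'] X[of a1 b a2 b'] X[of a2 b a1 b'] X[of a2 b a2 b'] that dist by auto
  qed
  have Pb: "p b \<in> path_image (P b)" if "b \<in> ?B" for b
    using P[OF that] E1[of a1 b] that by (metis UnI1 insertI1 pathfinish_in_path_image)
  have Pnb: "p v \<notin> path_image (P b)" if "b \<in> ?B" "v \<in> V" "v \<noteq> a1" "v \<noteq> a2" "v \<noteq> b" for b v
    using Y[of a1 b v] Y[of a2 b v] that P(4)[OF that(1)] pinj V AV BV by auto
  have G: "path_image (\<gamma> a3 b) \<inter> path_image (P b') \<subseteq> {p b}" if "b \<in> ?B" "b' \<in> ?B" for b b'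
    unfolding P(4)[OF that(2)]
    using X[of a3 b a1 b'] X[of a3 b a2 b'] that dist by auto
  have ne: "p a1 \<noteq> p a2" using pinj V dist by auto
  have d: "b1 \<in> ?B" "b2 \<in> ?B" "b3 \<in> ?B" "a3 \<in> ?A" by auto
  note P1 = P[OF d(1)] and P2 = P[OF d(2)] and P3 = P[OF d(3)]
  have i12: "path_image (P b1) \<inter> path_image (P b2) = {p a1, p a2}" using PP[of b1 b2] dist by auto
  have i13: "path_image (P b1) \<inter> path_image (P b3) = {p a1, p a2}" using PP[of b1 b3] dist by auto
  have i23: "path_image (P b2) \<inter> path_image (P b3) = {p a1, p a2}" using PP[of b2 b3] dist by auto
  have i21: "path_image (P b2) \<inter> path_image (P b1) = {p a1, p a2}" using PP[of b2 b1] dist by auto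
  have i31: "path_image (P b3) \<inter> path_image (P b1) = {p a1, p a2}" using PP[of b3 b1] dist by auto
  have i32: "path_image (P b3) \<inter> path_image (P b2) = {p a1, p a2}" using PP[of b3 b2] dist by auto
  have nb: "p bi \<notin> path_image (P bj)" if "bi \<in> ?B" "bj \<in> ?B" "bi \<noteq> bj" for bi bj
    using Pnb[of bj bi] that dist V by auto
  have nq: "p a3 \<notin> path_image (P b1) \<union> path_image (P b2) \<union> path_image (P b3)"
    using Pnb[of _ a3] dist V by auto
  have g: "path (\<gamma> a3 b)" "pathstart (\<gamma> a3 b) = p a3" "pathfinish (\<gamma> a3 b) = p b"
    "path_image (\<gamma> a3 b) \<inter> (path_image (P b1) \<union> path_image (P b2) \<union> path_image (P b3)) \<subseteq> {p b}"
    if "b \<in> ?B" for b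
    using E1[of a3 b] G[of b b1] G[of b b2] G[of b b3] that by (auto simp: arc_imp_path)
  note g1 = g[OF d(1)] and g2 = g[OF d(2)] and g3 = g[OF d(3)]
  have n12: "b1 \<noteq> b2" "b1 \<noteq> b3" "b2 \<noteq> b3" "b2 \<noteq> b1" "b3 \<noteq> b1" "b3 \<noteq> b2" using dist by auto
  from theta_middle[OF P1(1) P2(1) P3(1) P1(2,3) P2(2,3) P3(2,3) ne i12 i13 i23]
  show False
  proof (elim disjE)
    assume m: "path_image (P b3) \<inter> inside (path_image (P b1) \<union> path_image (P b2)) \<noteq> {}"
    show False
      by (rule theta_contra[OF P1(1) P2(1) P3(1) P1(2,3) P2(2,3) P3(2,3) ne i12 i13 i23 m
          Pb[OF d(1)] nb[OF d(1) d(2) n12(1)] nb[OF d(1) d(3) n12(2)]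
          Pb[OF d(2)] nb[OF d(2) d(1) n12(4)] nb[OF d(2) d(3) n12(3)]
          Pb[OF d(3)] nb[OF d(3) d(1) n12(5)] nb[OF d(3) d(2) n12(6)]
          nq g1 g2 g3])
  next
    assume m: "path_image (P b1) \<inter> inside (path_image (P b2) \<union> path_image (P b3)) \<noteq> {}"
    show False
      by (rule theta_contra[OF P2(1) P3(1) P1(1) P2(2,3) P3(2,3) P1(2,3) ne i23 i21 i31 m
          Pb[OF d(2)] nb[OF d(2) d(3) n12(3)] nb[OF d(2) d(1) n12(4)]
          Pb[OF d(3)] nb[OF d(3) d(2) n12(6)] nb[OF d(3) d(1) n12(5)]
          Pb[OF d(1)] nb[OF d(1) d(2) n12(1)] nb[OF d(1) d(3) n12(2)]
          _ g2(1-3) _ g3(1-3) _ g1(1-3)])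
        (use nq g1 g2 g3 in auto)
  next
    assume m: "path_image (P b2) \<inter> inside (path_image (P b1) \<union> path_image (P b3)) \<noteq> {}"
    show False
      by (rule theta_contra[OF P1(1) P3(1) P2(1) P1(2,3) P3(2,3) P2(2,3) ne i13 i12 i32 m
          Pb[OF d(1)] nb[OF d(1) d(3) n12(2)] nb[OF d(1) d(2) n12(1)]
          Pb[OF d(3)] nb[OF d(3) d(1) n12(5)] nb[OF d(3) d(2) n12(6)]
          Pb[OF d(2)] nb[OF d(2) d(1) n12(4)] nb[OF d(2) d(3) n12(3)]
          _ g1(1-3) _ g3(1-3) _ g2(1-3)])
        (use nq g1 g2 g3 in auto)
  qed
qed

lemma ideal_neg: "is_ideal I \<Longrightarrow> x \<in> I \<Longrightarrow> - x \<in> I"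
  unfolding is_ideal_def by (metis mult_minus1)
lemma ideal_add: "is_ideal I \<Longrightarrow> x \<in> I \<Longrightarrow> y \<in> I \<Longrightarrow> x + y \<in> I"
  unfolding is_ideal_def by blast
lemma ideal_diff: "is_ideal I \<Longrightarrow> x \<in> I \<Longrightarrow> y \<in> I \<Longrightarrow> x - y \<in> I"
  using ideal_add[of I x "- y"] ideal_neg[of I y] by simp
lemma ideal_mult: "is_ideal I \<Longrightarrow> x \<in> I \<Longrightarrow> r * x \<in> I"
  unfolding is_ideal_def by blast
lemma ideal_0: "is_ideal I \<Longrightarrow> 0 \<in> I"
  unfolding is_ideal_def by blast

lemma coset_self: "is_ideal I \<Longrightarrow> c \<in> coset I c"
  unfolding coset_def using ideal_0 by force

lemma quot_gen_mono:
  fixes I :: "'a::comm_ring_1 set"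
  assumes "is_ideal I" "finite S" "S \<subseteq> range (coset I)" "T \<subseteq> S"
  shows "quot_gen I T \<subseteq> quot_gen I S"
proof
  fix z assume "z \<in> quot_gen I T"
  then obtain r rep where rep: "\<forall>C\<in>T. rep C \<in> C" and z: "z - (\<Sum>C\<in>T. r C * rep C) \<in> I"
    unfolding quot_gen_def by blast
  define r' where "r' C = (if C \<in> T then r C else 0)" for C
  define rep' where "rep' C = (if C \<in> T then rep C else (SOME e. e \<in> C))" for C
  have "\<forall>C\<in>S. rep' C \<in> C"
  proof
    fix C assume "C \<in> S"
    then obtain c where "C = coset I c" using assms(3) by blast
    then have "\<exists>e. e \<in> C" using coset_self[OF assms(1)] by blast
    then show "rep' C \<in> C" using rep unfolding rep'_def by (auto intro: someI_ex)
  qed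
  moreover have "(\<Sum>C\<in>S. r' C * rep' C) = (\<Sum>C\<in>T. r C * rep C)"
  proof -
    have "(\<Sum>C\<in>S. r' C * rep' C) = (\<Sum>C\<in>T. r' C * rep' C)"
      by (rule sum.mono_neutral_right) (use assms in \<open>auto simp: r'_def\<close>)
    also have "\<dots> = (\<Sum>C\<in>T. r C * rep C)" by (rule sum.cong) (auto simp: r'_def rep'_def)
    finally show ?thesis .
  qed
  ultimately show "z \<in> quot_gen I S" unfolding quot_gen_def
    by (intro CollectI exI[of _ r'] exI[of _ rep'] conjI) (use z in simp_all)
qed

lemma drop_gen:
  fixes I :: "'a::comm_ring_1 set"
  assumes "is_ideal I" "finite S" "S \<subseteq> range (coset I)" "C0 \<in> S"
   and H: "\<And>rep. \<forall>C \<in> S - {C0}. rep C \<in> C \<Longrightarrow> \<forall>c \<in> C0. \<exists>s. c - (\<Sum>C\<in>S-{C0}. s C * rep C) \<in> I"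
  shows "quot_gen I (S - {C0}) = quot_gen I S"
proof
  show "quot_gen I (S - {C0}) \<subseteq> quot_gen I S" using quot_gen_mono assms by blast
  show "quot_gen I S \<subseteq> quot_gen I (S - {C0})"
  proof
    fix z assume "z \<in> quot_gen I S"
    then obtain r rep where rep: "\<forall>C\<in>S. rep C \<in> C" and z: "z - (\<Sum>C\<in>S. r C * rep C) \<in> I"
      unfolding quot_gen_def by blast
    have rep': "\<forall>C \<in> S - {C0}. rep C \<in> C" using rep by blast
    obtain s where s: "rep C0 - (\<Sum>C\<in>S-{C0}. s C * rep C) \<in> I"
      using H[OF rep'] rep assms(4) by blast
    have split: "(\<Sum>C\<in>S. r C * rep C) = r C0 * rep C0 + (\<Sum>C\<in>S-{C0}. r C * rep C)"
      using assms(2,4) by (simp add: sum.remove)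
    have "z - (\<Sum>C\<in>S-{C0}. (r C + r C0 * s C) * rep C)
        = (z - (\<Sum>C\<in>S. r C * rep C)) + r C0 * (rep C0 - (\<Sum>C\<in>S-{C0}. s C * rep C))"
      unfolding split by (simp add: distrib_right sum.distrib sum_distrib_left algebra_simps)
    also have "\<dots> \<in> I" using z s assms(1) ideal_add ideal_mult by blast
    finally have zI: "z - (\<Sum>C\<in>S-{C0}. (r C + r C0 * s C) * rep C) \<in> I" .
    show "z \<in> quot_gen I (S - {C0})" unfolding quot_gen_def
      by (rule CollectI, rule exI[of _ "\<lambda>C. r C + r C0 * s C"], rule exI[of _ rep]) (use rep' zI in blast)
  qed
qed

lemma gen_mem:
  fixes I :: "'a::comm_ring_1 set"
  assumes "is_ideal I" "finite S" "S \<subseteq> range (coset I)" "coset I c \<in> S"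
  shows "c \<in> quot_gen I S"
proof -
  have "c \<in> quot_gen I {coset I c}"
    unfolding quot_gen_def
    by (rule CollectI, rule exI[of _ "\<lambda>_. 1"], rule exI[of _ "\<lambda>_. c"])
       (simp add: coset_self[OF assms(1)] ideal_0[OF assms(1)])
  then show ?thesis using quot_gen_mono[OF assms(1-3)] assms(4) by blast
qed

lemma maxM:
  assumes "local_ring_with (M :: 'a::comm_ring_1 set)"
  shows "is_ideal M" "1 \<notin> M"
proof -
  have "is_ideal M" "M \<noteq> UNIV" using assms unfolding local_ring_with_def is_maximal_ideal_def by blast+
  then show "is_ideal M" "1 \<notin> M" using ideal_mult[of M 1] by auto
qed

lemma not_in_I:
  fixes I M :: "'a::comm_ring_1 set"
  assumes "is_ideal I" "finite S" "min_gen_set I M S" "coset I x \<in> S"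
  shows "x \<notin> I"
proof
  assume xI: "x \<in> I"
  have S: "S \<subseteq> range (coset I)" "quot_gen I S = M" "\<forall>T. T \<subset> S \<longrightarrow> quot_gen I T \<noteq> M"
    using assms(3) unfolding min_gen_set_def by blast+
  have "quot_gen I (S - {coset I x}) = quot_gen I S"
  proof (rule drop_gen[OF assms(1,2) S(1) assms(4)])
    fix rep
    show "\<forall>c \<in> coset I x. \<exists>s. c - (\<Sum>C\<in>S-{coset I x}. s C * rep C) \<in> I"
    proof
      fix c assume "c \<in> coset I x"
      then obtain i where "i \<in> I" "c = x + i" unfolding coset_def by blast
      then have h: "c - (\<Sum>C\<in>S-{coset I x}. 0 * rep C) \<in> I" using ideal_add[OF assms(1) xI] by simp
      show "\<exists>s. c - (\<Sum>C\<in>S-{coset I x}. s C * rep C) \<in> I"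
        apply (rule exI[of _ "\<lambda>C. 0"]) using h by simp
    qed
  qed
  moreover have "S - {coset I x} \<subset> S" using assms(4) by blast
  ultimately show False using S by auto
qed

lemma not_in_pp:
  fixes I M :: "'a::comm_ring_1 set"
  assumes "is_ideal I" "finite S" "min_gen_set I M S" "coset I x \<in> S" "coset I y \<in> S"
    "coset I x \<noteq> coset I y"
  shows "x \<notin> principal_plus I y"
proof
  assume "x \<in> principal_plus I y"
  then obtain r0 i0 where i0: "i0 \<in> I" and x: "x = y * r0 + i0" unfolding principal_plus_def by blast
  have S: "S \<subseteq> range (coset I)" "quot_gen I S = M" "\<forall>T. T \<subset> S \<longrightarrow> quot_gen I T \<noteq> M"
    using assms(3) unfolding min_gen_set_def by blast+
  have "quot_gen I (S - {coset I x}) = quot_gen I S"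
  proof (rule drop_gen[OF assms(1,2) S(1) assms(4)])
    fix rep
    assume rep: "\<forall>C \<in> S - {coset I x}. rep C \<in> C"
    have cy: "coset I y \<in> S - {coset I x}" using assms(5,6) by blast
    then have "rep (coset I y) \<in> coset I y" using rep by blast
    then obtain j where j: "j \<in> I" "rep (coset I y) = y + j" unfolding coset_def by auto
    let ?s = "\<lambda>C. if C = coset I y then r0 else 0"
    have sum: "(\<Sum>C\<in>S-{coset I x}. ?s C * rep C) = r0 * (y + j)"
    proof -
      have "(\<Sum>C\<in>S-{coset I x}. ?s C * rep C) = (\<Sum>C\<in>S-{coset I x}. if C = coset I y then r0 * rep C else 0)"
        by (rule sum.cong) auto
      also have "\<dots> = r0 * rep (coset I y)" using cy assms(2) by (simp add: sum.delta')
      finally show ?thesis using j by simp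
    qed
    show "\<forall>c \<in> coset I x. \<exists>s. c - (\<Sum>C\<in>S-{coset I x}. s C * rep C) \<in> I"
    proof
      fix c assume "c \<in> coset I x"
      then obtain i where i: "i \<in> I" "c = x + i" unfolding coset_def by blast
      have "c - r0 * (y + j) = (i0 + i) - r0 * j" using i x by (simp add: algebra_simps)
      also have "\<dots> \<in> I" using ideal_diff[OF assms(1) ideal_add[OF assms(1) i0 i(1)] ideal_mult[OF assms(1) j(1)]] .
      finally have h: "c - (\<Sum>C\<in>S-{coset I x}. ?s C * rep C) \<in> I" using sum by simp
      show "\<exists>s. c - (\<Sum>C\<in>S-{coset I x}. s C * rep C) \<in> I"
        apply (rule exI[of _ ?s]) using h by simp
    qed
  qed
  moreover have "S - {coset I x} \<subset> S" using assms(4) by blast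
  ultimately show False using S by auto
qed

lemma unit_inv: "u \<in> units \<Longrightarrow> \<exists>u'. u' * u = 1"
proof -
  assume "u \<in> units"
  then have "u dvd 1" unfolding units_def by simp
  then obtain k where "1 = u * k" by (rule dvdE)
  then show ?thesis by (metis mult.commute)
qed

lemma orbit_vertex:
  fixes I M :: "'a::comm_ring_1 set"
  assumes "is_ideal I" "is_ideal M" "1 \<notin> M" "I \<subseteq> M" "x \<in> M" "x \<notin> I" "a \<in> unit_orbit x"
  shows "a \<in> gamma_vertices I"
proof -
  obtain u where u: "u \<in> units" "a = u * x" using assms(7) unfolding unit_orbit_def by blast
  obtain u' where u': "u' * u = 1" using unit_inv[OF u(1)] by blast
  have "a \<notin> I"
  proof
    assume "a \<in> I"
    then have "u' * a \<in> I" using ideal_mult[OF assms(1)] by blast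
    then show False using u u' assms(6) by (simp add: mult.assoc[symmetric])
  qed
  moreover have "1 \<notin> principal_plus I a"
  proof
    assume "1 \<in> principal_plus I a"
    then obtain r i where "i \<in> I" "1 = a * r + i" unfolding principal_plus_def by blast
    moreover have "a * r \<in> M" using ideal_mult[OF assms(2) assms(5), of "u * r"] u by (simp add: ac_simps)
    ultimately have "1 \<in> M" using ideal_add[OF assms(2), of "a * r" i] assms(4) by auto
    then show False using assms(3) by simp
  qed
  ultimately show ?thesis unfolding gamma_vertices_def by auto
qed

lemma orbit_nonmem:
  fixes I :: "'a::comm_ring_1 set"
  assumes "is_ideal I" "x \<notin> principal_plus I y" "a \<in> unit_orbit x" "b \<in> unit_orbit y"
  shows "a \<notin> principal_plus I b"
proof
  assume "a \<in> principal_plus I b"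
  then obtain r i where i: "i \<in> I" "a = b * r + i" unfolding principal_plus_def by blast
  obtain u where u: "u \<in> units" "a = u * x" using assms(3) unfolding unit_orbit_def by blast
  obtain w where w: "w \<in> units" "b = w * y" using assms(4) unfolding unit_orbit_def by blast
  obtain u' where u': "u' * u = 1" using unit_inv[OF u(1)] by blast
  have "x = u' * a" using u u' by (simp add: mult.assoc[symmetric])
  also have "\<dots> = y * (u' * w * r) + u' * i" using i w by (simp add: algebra_simps)
  finally have "x \<in> principal_plus I y" using ideal_mult[OF assms(1) i(1)] unfolding principal_plus_def by blast
  then show False using assms(2) by simp
qed

lemma pp_self: "is_ideal I \<Longrightarrow> b \<in> principal_plus I b"
  unfolding principal_plus_def
  by (rule CollectI, rule exI[of _ 1], rule exI[of _ 0]) (simp add: ideal_0)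

lemma three_elems:
  assumes "finite A" "card A \<ge> 3"
  obtains a1 a2 a3 where "a1 \<in> A" "a2 \<in> A" "a3 \<in> A" "a1 \<noteq> a2" "a1 \<noteq> a3" "a2 \<noteq> a3"
proof -
  obtain B where "B \<subseteq> A" "card B = 3" "finite B" by (rule obtain_subset_with_card_n[OF assms(2)])
  then show ?thesis using that card_3_iff[of B] by auto
qed

theorem proposition3p13:
  fixes M I :: "'a::{comm_ring_1, finite} set" and S :: "'a set set" and x y :: 'a
  assumes "local_ring_with M"
    and "is_ideal I" and "I \<subseteq> M"
    and "\<not> quot_principal I M"
    and "min_gen_set I M S"
    and "coset I x \<in> S" and "coset I y \<in> S" and "coset I x \<noteq> coset I y"
    and "card (unit_orbit x) \<ge> 3" and "card (unit_orbit y) \<ge> 3"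
  shows "\<not> planar (gamma_vertices I) (gamma_adj I)"
proof -
  have fS: "finite S" by (rule finite_subset[OF subset_UNIV]) simp
  have M: "is_ideal M" "1 \<notin> M" using maxM[OF assms(1)] by auto
  have S: "S \<subseteq> range (coset I)" "quot_gen I S = M"
    using assms(5) unfolding min_gen_set_def by blast+
  have xM: "x \<in> M" using gen_mem[OF assms(2) fS S(1) assms(6)] S(2) by simp
  have yM: "y \<in> M" using gen_mem[OF assms(2) fS S(1) assms(7)] S(2) by simp
  have xI: "x \<notin> I" using not_in_I[OF assms(2) fS assms(5,6)] .
  have yI: "y \<notin> I" using not_in_I[OF assms(2) fS assms(5,7)] .
  have xy: "x \<notin> principal_plus I y" using not_in_pp[OF assms(2) fS assms(5,6,7,8)] .
  have yx: "y \<notin> principal_plus I x" using not_in_pp[OF assms(2) fS assms(5,7,6)] assms(8) by metis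
  have vx: "a \<in> gamma_vertices I" if "a \<in> unit_orbit x" for a
    using orbit_vertex[OF assms(2) M assms(3) xM xI that] .
  have vy: "a \<in> gamma_vertices I" if "a \<in> unit_orbit y" for a
    using orbit_vertex[OF assms(2) M assms(3) yM yI that] .
  have adj: "gamma_adj I a b" if "a \<in> unit_orbit x" "b \<in> unit_orbit y" for a b
  proof -
    have "a \<notin> principal_plus I b" using orbit_nonmem[OF assms(2) xy that] .
    moreover have "b \<notin> principal_plus I a" using orbit_nonmem[OF assms(2) yx that(2,1)] .
    moreover have "a \<noteq> b" using calculation(1) pp_self[OF assms(2)] by metis
    ultimately show ?thesis unfolding gamma_adj_def using vx vy that by blast
  qed
  obtain a1 a2 a3 where a: "a1 \<in> unit_orbit x" "a2 \<in> unit_orbit x" "a3 \<in> unit_orbit x"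
    "a1 \<noteq> a2" "a1 \<noteq> a3" "a2 \<noteq> a3"
    by (rule three_elems[OF _ assms(9)]) simp_all
  obtain b1 b2 b3 where b: "b1 \<in> unit_orbit y" "b2 \<in> unit_orbit y" "b3 \<in> unit_orbit y"
    "b1 \<noteq> b2" "b1 \<noteq> b3" "b2 \<noteq> b3"
    by (rule three_elems[OF _ assms(10)]) simp_all
  have ne: "a \<noteq> b" if "a \<in> unit_orbit x" "b \<in> unit_orbit y" for a b
    using adj[OF that] unfolding gamma_adj_def by blast
  show ?thesis
  proof (rule K33_not_planar[of a1 _ a2 a3 b1 b2 b3])
    show "a1 \<in> gamma_vertices I" "a2 \<in> gamma_vertices I" "a3 \<in> gamma_vertices I"
      using vx a by auto
    show "b1 \<in> gamma_vertices I" "b2 \<in> gamma_vertices I" "b3 \<in> gamma_vertices I"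
      using vy b by auto
    show "distinct [a1, a2, a3, b1, b2, b3]" using a b ne by auto
    show "\<And>a b. a \<in> {a1, a2, a3} \<Longrightarrow> b \<in> {b1, b2, b3} \<Longrightarrow> gamma_adj I a b"
      using adj a b by blast
  qed
qed

end
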